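(* Let $\mathcal{G}$ be a network with non-monitor set $N$ and set of measurement paths $P$, let $S\subseteq N$ and $k\ge1$. (a) If for every failure set $F\subseteq N$ with $|F|\le k$ and every node $v\in S\setminus F$ there exists $p\in P$ traversing $v$ but none of the nodes of $F$, then $S$ is $k$-identifiable. (b) If $S$ is $k$-identifiable, then for every failure set $F\subseteq N$ with $|F|\le k-1$ and every node $v\in S\setminus F$ there exists $p\in P$ traversing $v$ but none of the nodes of $F$.
   Context: $\mathcal{G}$ is a finite connected undirected graph whose node set is partitioned into monitors $M$ and non-monitors $N$; $P$ is an arbitrary set of measurement paths. A failure set is any $F\subseteq N$; a path fails iff it traverses a node of $F$. $P_F$ is the set of paths in $P$ traversing at least one node of $F$; $F_1,F_2$ are distinguishable iff $P_{F_1}\ne P_{F_2}$. $S\subseteq N$ is $k$-identifiable if any two failure sets $F_1,F_2$ with $|F_1|,|F_2|\le k$ and $F_1\cap S\ne F_2\cap S$ are distinguishable. *)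

theory Defs
  imports Main
begin

definition network :: "'v set \<Rightarrow> ('v \<Rightarrow> 'v \<Rightarrow> bool) \<Rightarrow> 'v set \<Rightarrow> 'v set \<Rightarrow> bool" where
  "network V E M N \<longleftrightarrow> finite V \<and> V \<noteq> {} \<and>
     (\<forall>u v. E u v \<longrightarrow> u \<in> V \<and> v \<in> V) \<and> (\<forall>u v. E u v \<longrightarrow> E v u) \<and> (\<forall>v. \<not> E v v) \<and>
     (\<forall>u\<in>V. \<forall>v\<in>V. (u, v) \<in> {(x, y). E x y}\<^sup>*) \<and>
     M \<union> N = V \<and> M \<inter> N = {}"

definition is_path :: "('v \<Rightarrow> 'v \<Rightarrow> bool) \<Rightarrow> 'v list \<Rightarrow> bool" where
  "is_path E p \<longleftrightarrow> p \<noteq> [] \<and> (\<forall>i. Suc i < length p \<longrightarrow> E (p ! i) (p ! Suc i))"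

definition traverses :: "'v list \<Rightarrow> 'v \<Rightarrow> bool" where
  "traverses p v \<longleftrightarrow> v \<in> set p"

definition failed_paths :: "'v list set \<Rightarrow> 'v set \<Rightarrow> 'v list set" where
  "failed_paths P F = {p \<in> P. \<exists>v\<in>F. traverses p v}"

definition distinguishable :: "'v list set \<Rightarrow> 'v set \<Rightarrow> 'v set \<Rightarrow> bool" where
  "distinguishable P F1 F2 \<longleftrightarrow> failed_paths P F1 \<noteq> failed_paths P F2"

definition k_identifiable :: "'v set \<Rightarrow> 'v list set \<Rightarrow> nat \<Rightarrow> 'v set \<Rightarrow> bool" where
  "k_identifiable N P k S \<longleftrightarrow>
     (\<forall>F1 F2. F1 \<subseteq> N \<longrightarrow> F2 \<subseteq> N \<longrightarrow> card F1 \<le> k \<longrightarrow> card F2 \<le> k \<longrightarrow>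
        F1 \<inter> S \<noteq> F2 \<inter> S \<longrightarrow> distinguishable P F1 F2)"

end

theory Submission
  imports Defs
begin

theorem lemma1:
  fixes V M N :: "'v set" and E :: "'v \<Rightarrow> 'v \<Rightarrow> bool" and P :: "'v list set"
    and S :: "'v set" and k :: nat
  assumes "network V E M N"
    and "\<forall>p\<in>P. is_path E p"
    and "S \<subseteq> N"
    and "k \<ge> 1"
  shows "((\<forall>F. F \<subseteq> N \<longrightarrow> card F \<le> k \<longrightarrow>
             (\<forall>v\<in>S - F. \<exists>p\<in>P. traverses p v \<and> (\<forall>u\<in>F. \<not> traverses p u)))
          \<longrightarrow> k_identifiable N P k S)
       \<and> (k_identifiable N P k S \<longrightarrow>
          (\<forall>F. F \<subseteq> N \<longrightarrow> card F \<le> k - 1 \<longrightarrow>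
             (\<forall>v\<in>S - F. \<exists>p\<in>P. traverses p v \<and> (\<forall>u\<in>F. \<not> traverses p u))))"
proof (intro conjI impI allI ballI)
  assume H: "\<forall>F. F \<subseteq> N \<longrightarrow> card F \<le> k \<longrightarrow>
             (\<forall>v\<in>S - F. \<exists>p\<in>P. traverses p v \<and> (\<forall>u\<in>F. \<not> traverses p u))"
  show "k_identifiable N P k S"
    unfolding k_identifiable_def
  proof (intro allI impI)
    fix F1 F2 assume a: "F1 \<subseteq> N" "F2 \<subseteq> N" "card F1 \<le> k" "card F2 \<le> k" "F1 \<inter> S \<noteq> F2 \<inter> S"
    have key: "distinguishable P A B" if T: "A \<subseteq> N" "B \<subseteq> N" "card B \<le> k" "v \<in> A \<inter> S" "v \<notin> B" for A B v
    proof -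
      obtain p where p: "p \<in> P" "traverses p v" "\<forall>u\<in>B. \<not> traverses p u"
      proof -
        have "v \<in> S - B" using T by blast
        then show ?thesis using H T(2,3) that by blast
      qed
      have "p \<in> failed_paths P A" using p T unfolding failed_paths_def by blast
      moreover have "p \<notin> failed_paths P B" using p unfolding failed_paths_def by blast
      ultimately show ?thesis unfolding distinguishable_def by blast
    qed
    from a(5) obtain v where "(v \<in> F1 \<inter> S \<and> v \<notin> F2) \<or> (v \<in> F2 \<inter> S \<and> v \<notin> F1)" by blast
    then show "distinguishable P F1 F2"
    proof
      assume "v \<in> F1 \<inter> S \<and> v \<notin> F2"
      then show ?thesis using key[of F1 F2 v] a(1,2,4) by blast
    next
      assume "v \<in> F2 \<inter> S \<and> v \<notin> F1"
      then have "distinguishable P F2 F1" using key[of F2 F1 v] a(1,2,3) by blast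
      then show ?thesis unfolding distinguishable_def by metis
    qed
  qed
next
  fix F v
  assume K: "k_identifiable N P k S" and F: "F \<subseteq> N" "card F \<le> k - 1" and v: "v \<in> S - F"
  have c: "card (insert v F) \<le> k"
  proof (cases "finite F")
    case True then show ?thesis using F v assms(4) by simp
  next
    case False then show ?thesis by simp
  qed
  have s1: "insert v F \<subseteq> N" using F v assms(3) by blast
  have s2: "card F \<le> k" using F(2) by simp
  have s3: "insert v F \<inter> S \<noteq> F \<inter> S" using v by blast
  have "distinguishable P (insert v F) F"
    using K s1 F(1) c s2 s3 unfolding k_identifiable_def by blast
  then have ne: "failed_paths P (insert v F) \<noteq> failed_paths P F"
    unfolding distinguishable_def by simp
  have sub: "failed_paths P F \<subseteq> failed_paths P (insert v F)"
    unfolding failed_paths_def by blast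
  obtain p where pp: "p \<in> failed_paths P (insert v F)" "p \<notin> failed_paths P F"
    using ne sub by blast
  have "p \<in> P" "traverses p v \<or> (\<exists>u\<in>F. traverses p u)" "\<not> (\<exists>u\<in>F. traverses p u)"
    using pp unfolding failed_paths_def by auto
  then show "\<exists>p\<in>P. traverses p v \<and> (\<forall>u\<in>F. \<not> traverses p u)"
    by blast
qed

end
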